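(* Let $F\colon\{0,1\}^n\to\{0,1\}^m$. Then $H(X\mid F(X))=\max_A H(A(X;R)\mid X)$, where the maximum is over all (computationally unbounded) $F$-collision-finders $A$, $X$ is uniform on $\{0,1\}^n$, and $R$ is uniformly random coin tosses for $A$.
   Context: An $F$-collision-finder is a randomized algorithm $A$ such that for every $x\in\{0,1\}^n$ and every coin tosses $r$, $A(x;r)\in F^{-1}(F(x))$. $H(\cdot\mid\cdot)$ is conditional Shannon entropy. *)

theory Defs
  imports "HOL-Probability.Probability"
begin

definition bits :: "nat \<Rightarrow> bool list set" where
  "bits n = {xs. length xs = n}"

definition coins :: "(nat \<Rightarrow> bool) measure" where
  "coins = PiM UNIV (\<lambda>_. measure_pmf (bernoulli_pmf (1/2)))"

definition sample_space :: "nat \<Rightarrow> (bool list \<times> (nat \<Rightarrow> bool)) measure" where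
  "sample_space n = measure_pmf (pmf_of_set (bits n)) \<Otimes>\<^sub>M coins"

text \<open>Being a randomized
  algorithm, its output is a measurable function of the coin tosses.\<close>
definition collision_finder ::
  "(bool list \<Rightarrow> bool list) \<Rightarrow> nat \<Rightarrow> (bool list \<Rightarrow> (nat \<Rightarrow> bool) \<Rightarrow> bool list) \<Rightarrow> bool" where
  "collision_finder F n A \<longleftrightarrow>
     (\<forall>x. A x \<in> coins \<rightarrow>\<^sub>M count_space UNIV) \<and>
     (\<forall>x\<in>bits n. \<forall>r. A x r \<in> bits n \<and> F (A x r) = F x)"

definition cond_H ::
  "nat \<Rightarrow> (bool list \<times> (nat \<Rightarrow> bool) \<Rightarrow> bool list) \<Rightarrow> (bool list \<times> (nat \<Rightarrow> bool) \<Rightarrow> bool list) \<Rightarrow> real" where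
  "cond_H n Y Z = prob_space.conditional_entropy (sample_space n) 2
      (count_space UNIV) (count_space UNIV) Y Z"

end

theory Submission
  imports Defs
begin



lemma cH_discrete:
  fixes Y :: "'s \<Rightarrow> 'a::countable" and Z :: "'s \<Rightarrow> 'b::countable"
  assumes M: "prob_space M"
    and meas: "(\<lambda>\<omega>. (Y \<omega>, Z \<omega>)) \<in> M \<rightarrow>\<^sub>M count_space UNIV"
    and D: "finite D" and AE: "AE \<omega> in M. (Y \<omega>, Z \<omega>) \<in> D"
  shows "prob_space.conditional_entropy M 2 (count_space UNIV) (count_space UNIV) Y Z =
    - (\<Sum>p\<in>D. measure M {\<omega>\<in>space M. (Y \<omega>, Z \<omega>) = p} *
        log 2 (measure M {\<omega>\<in>space M. (Y \<omega>, Z \<omega>) = p} / measure M {\<omega>\<in>space M. Z \<omega> = snd p}))"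
proof -
  interpret information_space M 2
    by (intro information_space.intro M) (unfold_locales, simp)
  define Pxy where "Pxy p = measure M {\<omega>\<in>space M. (Y \<omega>, Z \<omega>) = p}" for p
  define Pz where "Pz b = measure M {\<omega>\<in>space M. Z \<omega> = b}" for b
  have Zm: "Z \<in> M \<rightarrow>\<^sub>M count_space UNIV"
    using measurable_compose[OF meas, of snd "count_space UNIV"] by (simp add: comp_def)
  have Zpre: "Z -` {b} \<inter> space M \<in> sets M" for b
    using Zm by (simp add: measurable_count_space_eq2_countable)
  have Ppre: "(\<lambda>\<omega>. (Y \<omega>, Z \<omega>)) -` {p} \<inter> space M \<in> sets M" for p
    using meas by (cases p) (simp add: measurable_count_space_eq2_countable)
  have dZ: "distributed M (count_space UNIV) Z (\<lambda>b. ennreal (Pz b))"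
    unfolding distributed_def
  proof (intro conjI)
    show "distr M (count_space UNIV) Z = density (count_space UNIV) (\<lambda>b. ennreal (Pz b))"
    proof (rule measure_eqI_countable[where A=UNIV])
      fix a :: 'b
      have "emeasure (distr M (count_space UNIV) Z) {a} = emeasure M (Z -` {a} \<inter> space M)"
        using Zm by (simp add: emeasure_distr)
      also have "\<dots> = ennreal (Pz a)"
        unfolding Pz_def using Zpre[of a] by (simp add: emeasure_eq_measure vimage_def Int_def conj_commute)
      finally show "emeasure (distr M (count_space UNIV) Z) {a} = emeasure (density (count_space UNIV) (\<lambda>b. ennreal (Pz b))) {a}"
        by (simp add: emeasure_density)
    qed auto
  qed (auto simp: Zm)
  have dP: "distributed M (count_space UNIV \<Otimes>\<^sub>M count_space UNIV) (\<lambda>\<omega>. (Y \<omega>, Z \<omega>)) (\<lambda>p. ennreal (Pxy p))"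
    unfolding distributed_def pair_measure_countable[OF countableI_type countableI_type] UNIV_Times_UNIV
  proof (intro conjI)
    show "distr M (count_space UNIV) (\<lambda>\<omega>. (Y \<omega>, Z \<omega>)) = density (count_space UNIV) (\<lambda>p. ennreal (Pxy p))"
    proof (rule measure_eqI_countable[where A=UNIV])
      fix a :: "'a \<times> 'b"
      have "emeasure (distr M (count_space UNIV) (\<lambda>\<omega>. (Y \<omega>, Z \<omega>))) {a} = emeasure M ((\<lambda>\<omega>. (Y \<omega>, Z \<omega>)) -` {a} \<inter> space M)"
        using meas by (simp add: emeasure_distr)
      also have "\<dots> = ennreal (Pxy a)"
        unfolding Pxy_def using Ppre[of a] by (simp add: emeasure_eq_measure vimage_def Int_def conj_commute)
      finally show "emeasure (distr M (count_space UNIV) (\<lambda>\<omega>. (Y \<omega>, Z \<omega>))) {a} = emeasure (density (count_space UNIV) (\<lambda>p. ennreal (Pxy p))) {a}"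
        by (simp add: emeasure_density)
    qed auto
  qed (auto simp: meas)
  have ce: "conditional_entropy 2 (count_space UNIV) (count_space UNIV) Y Z =
     - (\<integral>(x, y). Pxy (x, y) * log 2 (Pxy (x, y) / Pz y) \<partial>(count_space UNIV \<Otimes>\<^sub>M count_space UNIV))"
    by (rule conditional_entropy_generic_eq[OF sigma_finite_measure_count_space sigma_finite_measure_count_space dZ _ dP])
       (auto simp: Pz_def Pxy_def)
  have zero: "Pxy p = 0" if "p \<notin> D" for p
  proof -
    have "AE \<omega> in M. (Y \<omega>, Z \<omega>) \<noteq> p" using AE that by (auto elim!: AE_mp)
    then have "prob {\<omega>\<in>space M. (Y \<omega>, Z \<omega>) = p} = 0"
      by (subst prob_eq_0_AE) auto
    then show ?thesis by (simp add: Pxy_def)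
  qed
  have hfun: "(\<lambda>(x, y). Pxy (x, y) * log 2 (Pxy (x, y) / Pz y)) = (\<lambda>p. Pxy p * log 2 (Pxy p / Pz (snd p)))"
    by auto
  have fin: "finite {a \<in> UNIV. (\<lambda>p. Pxy p * log 2 (Pxy p / Pz (snd p))) a \<noteq> 0}"
    by (rule finite_subset[OF _ D]) (use zero in force)
  have "(\<integral>(x, y). Pxy (x, y) * log 2 (Pxy (x, y) / Pz y) \<partial>(count_space UNIV \<Otimes>\<^sub>M count_space UNIV))
      = (\<Sum>p\<in>D. Pxy p * log 2 (Pxy p / Pz (snd p)))"
    unfolding pair_measure_countable[OF countableI_type countableI_type] UNIV_Times_UNIV hfun
    apply (subst lebesgue_integral_count_space_finite_support[OF fin])
    apply (rule sum.mono_neutral_left)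
    using D zero by auto
  then show ?thesis using ce by (simp add: Pxy_def Pz_def)
qed



abbreviation "BB \<equiv> measure_pmf (bernoulli_pmf (1/2))"
abbreviation "SB \<equiv> stream_space BB"

definition blk :: "nat \<Rightarrow> nat \<Rightarrow> bool stream \<Rightarrow> bool list" where
  "blk L j s = stake L (sdrop (j*L) s)"

definition samp :: "nat \<Rightarrow> bool list set \<Rightarrow> bool list \<Rightarrow> bool stream \<Rightarrow> bool list" where
  "samp L C d s = (if \<exists>j. blk L j s \<in> C then blk L (LEAST j. blk L j s \<in> C) s else d)"

lemma samp_in: "d \<in> C \<Longrightarrow> samp L C d s \<in> C"
  unfolding samp_def by (auto intro: LeastI_ex)

lemma blk_shift0: "length w = L \<Longrightarrow> blk L 0 (w @- s) = w"
  by (simp add: blk_def stake_shift)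

lemma blk_shiftSuc: "length w = L \<Longrightarrow> blk L (Suc j) (w @- s) = blk L j s"
  by (simp add: blk_def sdrop_shift)

lemma samp_shift:
  assumes "length w = L"
  shows "samp L C d (w @- s) = (if w \<in> C then w else samp L C d s)"
proof (cases "w \<in> C")
  case True
  then have "blk L 0 (w @- s) \<in> C" using blk_shift0[OF assms] by simp
  then have "(LEAST j. blk L j (w @- s) \<in> C) = 0" by (intro Least_eq_0)
  moreover have "\<exists>j. blk L j (w @- s) \<in> C" using \<open>blk L 0 (w @- s) \<in> C\<close> by blast
  ultimately show ?thesis using True blk_shift0[OF assms] unfolding samp_def by auto
next
  case False
  have e: "(\<exists>j. blk L j (w @- s) \<in> C) \<longleftrightarrow> (\<exists>j. blk L j s \<in> C)"
  proof
    assume "\<exists>j. blk L j (w @- s) \<in> C"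
    then obtain j where j: "blk L j (w @- s) \<in> C" by blast
    with False blk_shift0[OF assms] obtain j' where "j = Suc j'" by (cases j) auto
    with j blk_shiftSuc[OF assms] show "\<exists>j. blk L j s \<in> C" by auto
  next
    assume "\<exists>j. blk L j s \<in> C"
    then obtain j where "blk L j s \<in> C" by blast
    then show "\<exists>j. blk L j (w @- s) \<in> C" using blk_shiftSuc[OF assms] by metis
  qed
  show ?thesis
  proof (cases "\<exists>j. blk L j s \<in> C")
    case True
    then obtain j where j: "blk L j s \<in> C" by blast
    have "(LEAST j. blk L j (w @- s) \<in> C) = Suc (LEAST m. blk L (Suc m) (w @- s) \<in> C)"
      by (rule Least_Suc[of _ "Suc j"]) (use j False blk_shift0[OF assms] blk_shiftSuc[OF assms] in auto)
    then show ?thesis using True e False unfolding samp_def by (simp add: blk_shiftSuc[OF assms])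
  next
    case False
    then show ?thesis using e \<open>w \<notin> C\<close> unfolding samp_def by simp
  qed
qed

lemma sets_BB: "sets BB = sets (count_space UNIV)" by simp

lemma samp_meas: "samp L C d \<in> SB \<rightarrow>\<^sub>M count_space UNIV"
proof -
  have "samp L C d \<in> stream_space (count_space UNIV) \<rightarrow>\<^sub>M count_space UNIV"
    unfolding samp_def blk_def by measurable
  then show ?thesis
    by (subst measurable_cong_sets[OF sets_stream_space_cong[OF sets_BB] refl])
qed

lemma prob_SB: "prob_space SB"
  by (rule prob_space.prob_space_stream_space) (rule prob_space_measure_pmf)

lemma bits_Suc: "bits (Suc L) = Cons True ` bits L \<union> Cons False ` bits L"
  unfolding bits_def
  by (auto simp: length_Suc_conv)

lemma sum_bits_Suc: "(\<Sum>w\<in>bits (Suc L). h w) = (\<Sum>w\<in>bits L. h (True # w)) + (\<Sum>w\<in>bits L. h (False # w))"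
proof -
  have fin: "finite (bits L)" using finite_lists_length_eq[of "UNIV::bool set" L] unfolding bits_def by simp
  show ?thesis unfolding bits_Suc
    by (subst sum.union_disjoint) (auto simp: fin sum.reindex)
qed

lemma bits_0: "bits 0 = {[]}" by (auto simp: bits_def)

lemma nn_shift:
  assumes "f \<in> borel_measurable SB"
  shows "(\<integral>\<^sup>+X. f X \<partial>SB) = (\<Sum>w\<in>bits L. ennreal ((1/2)^L) * (\<integral>\<^sup>+X. f (w @- X) \<partial>SB))"
  using assms
proof (induction L arbitrary: f)
  case 0
  then show ?case by (simp add: bits_0)
next
  case (Suc L)
  have h: "ennreal ((1/2)^L/2) = inverse 2 * ennreal ((1/2)^L)"
  proof -
    have "ennreal ((1/2)^L/2) = ennreal ((1/2)^L) / 2" by (rule ennreal_divide_numeral[symmetric]) simp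
    then show ?thesis by (simp add: divide_ennreal_def mult.commute)
  qed
  have mT: "(\<lambda>X. f (b ## X)) \<in> borel_measurable SB" for b
    using Suc.prems by measurable
  have "(\<integral>\<^sup>+X. f X \<partial>SB) = (\<integral>\<^sup>+x. (\<integral>\<^sup>+X. f (x ## X) \<partial>SB) \<partial>BB)"
    by (rule prob_space.nn_integral_stream_space[OF prob_space_measure_pmf Suc.prems])
  also have "\<dots> = (\<Sum>x\<in>UNIV. (\<integral>\<^sup>+X. f (x ## X) \<partial>SB) * pmf (bernoulli_pmf (1/2)) x)"
    by (rule nn_integral_measure_pmf_support) auto
  also have "\<dots> = ennreal (1/2) * (\<integral>\<^sup>+X. f (True ## X) \<partial>SB) + ennreal (1/2) * (\<integral>\<^sup>+X. f (False ## X) \<partial>SB)"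
    by (simp add: UNIV_bool mult.commute)
  also have "\<dots> = (\<Sum>w\<in>bits (Suc L). ennreal ((1/2)^Suc L) * (\<integral>\<^sup>+X. f (w @- X) \<partial>SB))"
    unfolding sum_bits_Suc Suc.IH[OF mT] sum_distrib_left
    using h by (simp add: mult.assoc)
  finally show ?case .
qed

lemma finite_bits: "finite (bits L)"
  using finite_lists_length_eq[of "UNIV::bool set" L] unfolding bits_def by simp

lemma card_bits: "card (bits L) = 2^L"
  using card_lists_length_eq[of "UNIV::bool set" L] unfolding bits_def by simp

lemma samp_prob:
  assumes C: "C \<subseteq> bits L" "a \<in> C"
  shows "measure SB {s. samp L C d s = a} = 1 / card C"
proof -
  interpret P: prob_space SB by (rule prob_SB)
  define E where "E = {s. samp L C d s = a}"
  have sp: "space SB = UNIV" by (simp add: space_stream_space)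
  have Em: "E \<in> sets SB"
    using measurable_sets[OF samp_meas, of "{a}" L C d] by (simp add: sp E_def vimage_def)
  define p where "p = measure SB E"
  have p0: "0 \<le> p" by (simp add: p_def)
  have "ennreal p = (\<integral>\<^sup>+X. indicator E X \<partial>SB)"
    using Em by (simp add: p_def P.emeasure_eq_measure)
  also have "\<dots> = (\<Sum>w\<in>bits L. ennreal ((1/2)^L) * (\<integral>\<^sup>+X. indicator E (w @- X) \<partial>SB))"
    by (rule nn_shift) (use Em in simp)
  also have "\<dots> = (\<Sum>w\<in>bits L. ennreal ((1/2)^L) * ennreal (if w \<in> C then (if w = a then 1 else 0) else p))"
  proof (rule sum.cong[OF refl])
    fix w assume w: "w \<in> bits L"
    then have lw: "length w = L" by (simp add: bits_def)
    show "ennreal ((1/2)^L) * (\<integral>\<^sup>+X. indicator E (w @- X) \<partial>SB) =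
      ennreal ((1/2)^L) * ennreal (if w \<in> C then (if w = a then 1 else 0) else p)"
    proof (cases "w \<in> C")
      case True
      then have "(\<lambda>X. indicator E (w @- X) :: ennreal) = (\<lambda>X. ennreal (if w = a then 1 else 0))"
        by (auto simp: E_def samp_shift[OF lw] indicator_def)
      then show ?thesis using True P.emeasure_space_1 by (simp add: sp)
    next
      case False
      then have "(\<lambda>X. indicator E (w @- X) :: ennreal) = indicator E"
        by (auto simp: E_def samp_shift[OF lw] indicator_def)
      then show ?thesis using False Em by (simp add: p_def P.emeasure_eq_measure)
    qed
  qed
  also have "\<dots> = ennreal (\<Sum>w\<in>bits L. (1/2)^L * (if w \<in> C then (if w = a then 1 else 0) else p))"
    using p0 by (subst sum_ennreal[symmetric]) (auto simp: ennreal_mult'')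
  finally have eq: "p = (\<Sum>w\<in>bits L. (1/2)^L * (if w \<in> C then (if w = a then 1 else 0) else p))"
    using p0 by (subst (asm) ennreal_inj) (auto intro!: sum_nonneg)
  have fC: "finite C" using finite_subset[OF C(1) finite_bits] .
  have "(\<Sum>w\<in>bits L. (1/2)^L * (if w \<in> C then (if w = a then 1 else 0) else p))
      = (\<Sum>w\<in>C. (1/2)^L * (if w = a then 1 else 0)) + (\<Sum>w\<in>bits L - C. (1/2)^L * p)"
    by (subst sum.subset_diff[OF C(1) finite_bits]) (auto intro!: sum.cong)
  also have "\<dots> = (1/2)^L + real (card (bits L - C)) * ((1/2)^L * p)"
    using C fC by (simp add: sum.delta if_distrib[of "\<lambda>x. _ * x"] cong: if_cong)
  also have "real (card (bits L - C)) = 2^L - real (card C)"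
  proof -
    have "card C \<le> 2^L" using card_mono[OF finite_bits C(1)] by (simp add: card_bits)
    then show ?thesis using C(1) fC by (simp add: card_Diff_subset card_bits of_nat_diff)
  qed
  finally have eq2: "p = (1/2)^L + (2^L - real (card C)) * ((1/2)^L * p)" using eq by simp
  have "(2::real)^L * (1/2)^L = 1" by (simp add: power_mult_distrib[symmetric])
  then have "real (card C) * p = 1" using eq2 by (simp add: algebra_simps) 
  moreover have "card C > 0" using fC C(2) by (auto simp: card_gt_0_iff)
  ultimately show ?thesis by (simp add: E_def p_def field_simps)
qed



lemma bits_ne: "bits n \<noteq> {}"
  by (auto simp: bits_def intro: exI[of _ "replicate n True"])



lemma prob_coins: "prob_space coins"
  unfolding coins_def by (rule prob_space_PiM) (rule prob_space_measure_pmf)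

lemma space_coins: "space coins = UNIV"
  by (simp add: coins_def space_PiM)

lemma prob_M: "prob_space (sample_space n)"
  unfolding sample_space_def by (rule prob_space_pair[OF prob_space_measure_pmf prob_coins])

lemma space_M: "space (sample_space n) = UNIV"
  by (simp add: sample_space_def space_pair_measure space_coins)

lemma measure_M_Times:
  assumes "B \<in> sets coins"
  shows "measure (sample_space n) (A \<times> B) = measure (measure_pmf (pmf_of_set (bits n))) A * measure coins B"
proof -
  interpret C: prob_space coins by (rule prob_coins)
  have "emeasure (sample_space n) (A \<times> B) = emeasure (measure_pmf (pmf_of_set (bits n))) A * emeasure coins B"
    unfolding sample_space_def by (rule C.emeasure_pair_measure_Times) (auto simp: assms)
  also have "\<dots> = ennreal (measure (measure_pmf (pmf_of_set (bits n))) A * measure coins B)"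
    by (simp add: measure_pmf.emeasure_eq_measure C.emeasure_eq_measure ennreal_mult)
  finally show ?thesis by (simp add: measure_def)
qed

lemma pmf_set: "measure (measure_pmf (pmf_of_set (bits n))) A = real (card (bits n \<inter> A)) / 2^n"
  by (simp add: measure_pmf_of_set[OF bits_ne finite_bits] card_bits)

lemma AE_M: "AE \<omega> in sample_space n. fst \<omega> \<in> bits n"
proof -
  interpret C: prob_space coins by (rule prob_coins)
  have "AE x in measure_pmf (pmf_of_set (bits n)). x \<in> bits n"
    by (simp add: AE_measure_pmf_iff set_pmf_of_set[OF bits_ne finite_bits])
  then have "AE x in distr (sample_space n) (measure_pmf (pmf_of_set (bits n))) fst. x \<in> bits n"
    unfolding sample_space_def C.distr_pair_fst .
  then show ?thesis
    by (rule AE_distrD[rotated]) (simp add: sample_space_def)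
qed

lemma gibbs:
  fixes q :: "bool list \<Rightarrow> real"
  assumes S: "finite S" and CS: "C \<subseteq> S" and q0: "\<And>a. 0 \<le> q a"
    and qz: "\<And>a. a \<in> S - C \<Longrightarrow> q a = 0" and q1: "(\<Sum>a\<in>C. q a) = 1"
  shows "- (\<Sum>a\<in>S. q a * log 2 (q a)) \<le> log 2 (card C)"
proof -
  have fC: "finite C" using finite_subset[OF CS S] .
  have Cne: "C \<noteq> {}" using q1 by auto
  define c where "c = real (card C)"
  have c0: "c > 0" using fC Cne by (simp add: c_def card_gt_0_iff)
  have sS: "(\<Sum>a\<in>S. q a * log 2 (q a)) = (\<Sum>a\<in>C. q a * log 2 (q a))"
    by (rule sum.mono_neutral_right[OF S CS]) (use qz in auto)
  have tm: "- (q a * log 2 (q a)) - q a * log 2 c \<le> (1/c - q a) / ln 2" if "a \<in> C" for a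
  proof (cases "q a = 0")
    case True then show ?thesis using c0 by simp
  next
    case False
    then have qp: "q a > 0" using q0[of a] by simp
    have "- (q a * log 2 (q a)) - q a * log 2 c = q a * log 2 (1 / (c * q a))"
      using qp c0 by (simp add: log_divide log_mult algebra_simps)
    also have "\<dots> = q a * ln (1 / (c * q a)) / ln 2" by (simp add: log_def)
    also have "\<dots> \<le> q a * (1 / (c * q a) - 1) / ln 2"
      using qp c0 by (intro divide_right_mono mult_left_mono ln_le_minus_one) auto
    also have "\<dots> = (1/c - q a) / ln 2" using qp c0 by (simp add: field_simps)
    finally show ?thesis .
  qed
  have "(\<Sum>a\<in>C. - (q a * log 2 (q a)) - q a * log 2 c) \<le> (\<Sum>a\<in>C. (1/c - q a) / ln 2)"
    by (rule sum_mono) (rule tm)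
  also have "\<dots> = (c * (1/c) - 1) / ln 2"
    using q1 by (simp add: sum_divide_distrib[symmetric] sum_subtractf c_def)
  also have "\<dots> = 0" using c0 by simp
  finally have "(\<Sum>a\<in>C. - (q a * log 2 (q a)) - q a * log 2 c) \<le> 0" .
  moreover have "(\<Sum>a\<in>C. - (q a * log 2 (q a)) - q a * log 2 c) = - (\<Sum>a\<in>C. q a * log 2 (q a)) - log 2 c"
  proof -
    have "(\<Sum>a\<in>C. - (q a * log 2 (q a)) - q a * log 2 c) = - (\<Sum>a\<in>C. q a * log 2 (q a)) - (\<Sum>a\<in>C. q a) * log 2 c"
      by (simp only: sum_subtractf sum_negf sum_distrib_right)
    then show "(\<Sum>a\<in>C. - (q a * log 2 (q a)) - q a * log 2 c) = - (\<Sum>a\<in>C. q a * log 2 (q a)) - log 2 c"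
      using q1 by simp
  qed
  ultimately show ?thesis using sS unfolding c_def by linarith
qed



lemma sets_pmfM: "sets (measure_pmf p) = sets (count_space UNIV)" by simp

lemma HF:
  "cond_H n fst (\<lambda>\<omega>. F (fst \<omega>)) = (\<Sum>x\<in>bits n. log 2 (card {a\<in>bits n. F a = F x}) / 2^n)"
proof -
  let ?M = "sample_space n"
  interpret P: prob_space ?M by (rule prob_M)
  interpret C: prob_space coins by (rule prob_coins)
  have m1: "(\<lambda>x. (x, F x)) \<in> measure_pmf (pmf_of_set (bits n)) \<rightarrow>\<^sub>M count_space UNIV"
    by (subst measurable_cong_sets[OF sets_pmfM refl]) simp
  have meas: "(\<lambda>\<omega>. (fst \<omega>, F (fst \<omega>))) \<in> ?M \<rightarrow>\<^sub>M count_space UNIV"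
    using measurable_compose[OF measurable_fst m1] by (simp add: sample_space_def comp_def)
  have AE: "AE \<omega> in ?M. (fst \<omega>, F (fst \<omega>)) \<in> (\<lambda>x. (x, F x)) ` bits n"
    using AE_M by eventually_elim auto
  have "cond_H n fst (\<lambda>\<omega>. F (fst \<omega>)) = - (\<Sum>p\<in>(\<lambda>x. (x, F x)) ` bits n.
      measure ?M {\<omega>\<in>space ?M. (fst \<omega>, F (fst \<omega>)) = p} *
        log 2 (measure ?M {\<omega>\<in>space ?M. (fst \<omega>, F (fst \<omega>)) = p} / measure ?M {\<omega>\<in>space ?M. F (fst \<omega>) = snd p}))"
    unfolding cond_H_def by (rule cH_discrete[OF prob_M meas finite_imageI[OF finite_bits] AE])
  also have "\<dots> = - (\<Sum>x\<in>bits n.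
      measure ?M {\<omega>\<in>space ?M. (fst \<omega>, F (fst \<omega>)) = (x, F x)} *
        log 2 (measure ?M {\<omega>\<in>space ?M. (fst \<omega>, F (fst \<omega>)) = (x, F x)} / measure ?M {\<omega>\<in>space ?M. F (fst \<omega>) = F x}))"
    by (subst sum.reindex) (auto simp: inj_on_def)
  also have "\<dots> = - (\<Sum>x\<in>bits n. - (log 2 (card {a\<in>bits n. F a = F x}) / 2^n))"
  proof (intro arg_cong[where f=uminus] sum.cong refl)
    fix x assume x: "x \<in> bits n"
    have e1: "{\<omega>\<in>space ?M. (fst \<omega>, F (fst \<omega>)) = (x, F x)} = {x} \<times> UNIV"
      by (auto simp: space_M)
    have e2: "{\<omega>\<in>space ?M. F (fst \<omega>) = F x} = {a. F a = F x} \<times> UNIV"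
      by (auto simp: space_M)
    have m1: "measure ?M ({x} \<times> UNIV) = 1 / 2^n"
      using x by (subst measure_M_Times) (auto simp: space_coins[symmetric] C.prob_space pmf_set)
    have "bits n \<inter> {a. F a = F x} = {a\<in>bits n. F a = F x}" by auto
    then have m2: "measure ?M ({a. F a = F x} \<times> UNIV) = real (card {a\<in>bits n. F a = F x}) / 2^n"
      by (subst measure_M_Times) (auto simp: space_coins[symmetric] C.prob_space pmf_set)
    have cpos: "card {a\<in>bits n. F a = F x} > 0"
      using x finite_bits[of n] by (auto simp: card_gt_0_iff)
    show "measure ?M {\<omega>\<in>space ?M. (fst \<omega>, F (fst \<omega>)) = (x, F x)} *
        log 2 (measure ?M {\<omega>\<in>space ?M. (fst \<omega>, F (fst \<omega>)) = (x, F x)} / measure ?M {\<omega>\<in>space ?M. F (fst \<omega>) = F x})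
      = - (log 2 (card {a\<in>bits n. F a = F x}) / 2^n)"
      unfolding e1 e2 m1 m2 using cpos by (simp add: log_divide)
  qed
  finally show ?thesis by (simp add: sum_negf)
qed

lemma HA:
  assumes cf: "collision_finder F n A"
  shows "cond_H n (\<lambda>\<omega>. A (fst \<omega>) (snd \<omega>)) fst =
    (\<Sum>x\<in>bits n. (- (\<Sum>a\<in>bits n. measure coins {r. A x r = a} * log 2 (measure coins {r. A x r = a}))) / 2^n)"
proof -
  let ?M = "sample_space n"
  let ?q = "\<lambda>x a. measure coins {r. A x r = a}"
  interpret P: prob_space ?M by (rule prob_M)
  interpret C: prob_space coins by (rule prob_coins)
  have Am: "A x \<in> coins \<rightarrow>\<^sub>M count_space UNIV" for x using cf by (simp add: collision_finder_def)
  have Aset: "{r. A x r = a} \<in> sets coins" for x a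
    using measurable_sets[OF Am, of "{a}" x] by (simp add: space_coins vimage_def)
  have Ain: "x \<in> bits n \<Longrightarrow> A x r \<in> bits n \<and> F (A x r) = F x" for x r
    using cf by (simp add: collision_finder_def)
  have e1: "{\<omega>\<in>space ?M. (A (fst \<omega>) (snd \<omega>), fst \<omega>) = (a, x)} = {x} \<times> {r. A x r = a}" for a x
    by (auto simp: space_M)
  have e2: "{\<omega>\<in>space ?M. fst \<omega> = x} = {x} \<times> UNIV" for x
    by (auto simp: space_M)
  have meas: "(\<lambda>\<omega>. (A (fst \<omega>) (snd \<omega>), fst \<omega>)) \<in> ?M \<rightarrow>\<^sub>M count_space UNIV"
    unfolding measurable_count_space_eq2_countable
  proof (intro conjI ballI)
    fix p :: "bool list \<times> bool list"
    obtain a x where p: "p = (a, x)" by (cases p)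
    have "(\<lambda>\<omega>. (A (fst \<omega>) (snd \<omega>), fst \<omega>)) -` {p} \<inter> space ?M = {x} \<times> {r. A x r = a}"
      using e1[of a x] unfolding p by auto
    also have "\<dots> \<in> sets ?M" unfolding sample_space_def
      by (rule pair_measureI) (auto simp: Aset)
    finally show "(\<lambda>\<omega>. (A (fst \<omega>) (snd \<omega>), fst \<omega>)) -` {p} \<inter> space ?M \<in> sets ?M" .
  qed auto
  have AE: "AE \<omega> in ?M. (A (fst \<omega>) (snd \<omega>), fst \<omega>) \<in> bits n \<times> bits n"
    using AE_M by eventually_elim (auto simp: Ain)
  have "cond_H n (\<lambda>\<omega>. A (fst \<omega>) (snd \<omega>)) fst = - (\<Sum>p\<in>bits n \<times> bits n.
      measure ?M {\<omega>\<in>space ?M. (A (fst \<omega>) (snd \<omega>), fst \<omega>) = p} *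
        log 2 (measure ?M {\<omega>\<in>space ?M. (A (fst \<omega>) (snd \<omega>), fst \<omega>) = p} / measure ?M {\<omega>\<in>space ?M. fst \<omega> = snd p}))"
    unfolding cond_H_def by (rule cH_discrete[OF prob_M meas finite_cartesian_product[OF finite_bits finite_bits] AE])
  also have "\<dots> = - (\<Sum>p\<in>bits n \<times> bits n. (\<lambda>(a, x). ?q x a * log 2 (?q x a) / 2^n) p)"
  proof (intro arg_cong[where f=uminus] sum.cong refl)
    fix p assume "p \<in> bits n \<times> bits n"
    then obtain a x where p: "p = (a, x)" and x: "x \<in> bits n" by auto
    have m1: "measure ?M ({x} \<times> {r. A x r = a}) = ?q x a / 2^n"
      using x by (subst measure_M_Times) (auto simp: Aset pmf_set)
    have m2: "measure ?M ({x} \<times> UNIV) = 1 / 2^n"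
      using x by (subst measure_M_Times) (auto simp: space_coins[symmetric] C.prob_space pmf_set)
    show "measure ?M {\<omega>\<in>space ?M. (A (fst \<omega>) (snd \<omega>), fst \<omega>) = p} *
        log 2 (measure ?M {\<omega>\<in>space ?M. (A (fst \<omega>) (snd \<omega>), fst \<omega>) = p} / measure ?M {\<omega>\<in>space ?M. fst \<omega> = snd p})
      = (\<lambda>(a, x). ?q x a * log 2 (?q x a) / 2^n) p"
      unfolding p e1 e2 snd_conv m1 m2 by simp
  qed
  also have "\<dots> = - (\<Sum>a\<in>bits n. \<Sum>x\<in>bits n. ?q x a * log 2 (?q x a) / 2^n)"
    by (simp add: sum.cartesian_product)
  also have "\<dots> = (\<Sum>x\<in>bits n. (- (\<Sum>a\<in>bits n. ?q x a * log 2 (?q x a))) / 2^n)"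
    by (subst sum.swap) (simp add: sum_divide_distrib[symmetric] sum_negf)
  finally show ?thesis .
qed

lemma q_sum1:
  assumes cf: "collision_finder F n A" and x: "x \<in> bits n"
  shows "(\<Sum>a\<in>{a\<in>bits n. F a = F x}. measure coins {r. A x r = a}) = 1"
proof -
  interpret C: prob_space coins by (rule prob_coins)
  have Am: "A x \<in> coins \<rightarrow>\<^sub>M count_space UNIV" using cf by (simp add: collision_finder_def)
  have Ain: "A x r \<in> {a\<in>bits n. F a = F x}" for r
    using cf x by (simp add: collision_finder_def)
  let ?D = "distr coins (count_space UNIV) (A x)"
  interpret D: prob_space ?D by (rule C.prob_space_distr[OF Am])
  have "measure ?D {a\<in>bits n. F a = F x} = (\<Sum>a\<in>{a\<in>bits n. F a = F x}. measure ?D {a})"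
    by (rule D.finite_measure_eq_sum_singleton) (auto simp: finite_bits)
  also have "\<dots> = (\<Sum>a\<in>{a\<in>bits n. F a = F x}. measure coins {r. A x r = a})"
    by (intro sum.cong refl) (simp add: measure_distr[OF Am] space_coins vimage_def)
  finally have "(\<Sum>a\<in>{a\<in>bits n. F a = F x}. measure coins {r. A x r = a}) = measure ?D {a\<in>bits n. F a = F x}" ..
  also have "\<dots> = measure coins (space coins)"
    using Ain by (simp add: measure_distr[OF Am] space_coins vimage_def)
  also have "\<dots> = 1" by (rule C.prob_space)
  finally show ?thesis .
qed

theorem proposition3p4:
  fixes F :: "bool list \<Rightarrow> bool list" and n m :: nat
  assumes "\<forall>x\<in>bits n. F x \<in> bits m"
  shows "(\<forall>A. collision_finder F n A \<longrightarrow>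
            cond_H n (\<lambda>\<omega>. A (fst \<omega>) (snd \<omega>)) fst \<le> cond_H n fst (\<lambda>\<omega>. F (fst \<omega>)))
       \<and> (\<exists>A. collision_finder F n A \<and>
            cond_H n (\<lambda>\<omega>. A (fst \<omega>) (snd \<omega>)) fst = cond_H n fst (\<lambda>\<omega>. F (fst \<omega>)))"
proof (intro conjI allI impI)
  fix A assume cf: "collision_finder F n A"
  have Ain: "x \<in> bits n \<Longrightarrow> A x r \<in> bits n \<and> F (A x r) = F x" for x r
    using cf by (simp add: collision_finder_def)
  have "(- (\<Sum>a\<in>bits n. measure coins {r. A x r = a} * log 2 (measure coins {r. A x r = a}))) / 2^n
      \<le> log 2 (card {a\<in>bits n. F a = F x}) / 2^n" if x: "x \<in> bits n" for x
  proof (rule divide_right_mono)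
    show "- (\<Sum>a\<in>bits n. measure coins {r. A x r = a} * log 2 (measure coins {r. A x r = a}))
      \<le> log 2 (card {a\<in>bits n. F a = F x})"
    proof (rule gibbs[OF finite_bits])
      fix a assume "a \<in> bits n - {a\<in>bits n. F a = F x}"
      then have "{r. A x r = a} = {}" using Ain[OF x] by auto
      then show "measure coins {r. A x r = a} = 0" by simp
    qed (auto simp: q_sum1[OF cf x])
  qed simp
  then show "cond_H n (\<lambda>\<omega>. A (fst \<omega>) (snd \<omega>)) fst \<le> cond_H n fst (\<lambda>\<omega>. F (fst \<omega>))"
    unfolding HA[OF cf] HF by (rule sum_mono)
next
  define A0 where "A0 x r = samp n {a\<in>bits n. F a = F x} x (to_stream r)" for x r
  have distr_eq: "distr coins SB to_stream = SB"
    unfolding coins_def by (rule stream_space_eq_distr[symmetric])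
  have A0m: "A0 x \<in> coins \<rightarrow>\<^sub>M count_space UNIV" for x
    unfolding coins_def A0_def using measurable_compose[OF measurable_to_stream samp_meas]
    by (simp add: comp_def)
  have A0in: "A0 x r \<in> {a\<in>bits n. F a = F x}" if x: "x \<in> bits n" for x r
    unfolding A0_def by (rule samp_in) (use x in simp)
  have cf: "collision_finder F n A0"
    unfolding collision_finder_def using A0m A0in by auto
  have q: "measure coins {r. A0 x r = a} = (if a \<in> {a\<in>bits n. F a = F x} then 1 / card {a\<in>bits n. F a = F x} else 0)"
    if x: "x \<in> bits n" for x a
  proof -
    have Em: "{s. samp n {a\<in>bits n. F a = F x} x s = a} \<in> sets SB"
      using measurable_sets[OF samp_meas, of "{a}" n "{a\<in>bits n. F a = F x}" x]
      by (simp add: space_stream_space vimage_def)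
    have "measure coins {r. A0 x r = a} = measure (distr coins SB to_stream) {s. samp n {a\<in>bits n. F a = F x} x s = a}"
      by (subst measure_distr[OF _ Em]) (auto simp: coins_def space_PiM A0_def vimage_def)
    also have "\<dots> = measure SB {s. samp n {a\<in>bits n. F a = F x} x s = a}" unfolding distr_eq ..
    also have "\<dots> = (if a \<in> {a\<in>bits n. F a = F x} then 1 / card {a\<in>bits n. F a = F x} else 0)"
    proof (cases "a \<in> {a\<in>bits n. F a = F x}")
      case True
      then show ?thesis by (simp add: samp_prob)
    next
      case False
      have "{s. samp n {a\<in>bits n. F a = F x} x s = a} = {}"
        using samp_in[of x "{a\<in>bits n. F a = F x}" n] x False by auto
      then show ?thesis by (simp only: if_not_P[OF False] measure_empty)
    qed
    finally show ?thesis .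
  qed
  have ent: "(- (\<Sum>a\<in>bits n. measure coins {r. A0 x r = a} * log 2 (measure coins {r. A0 x r = a}))) / 2^n
      = log 2 (card {a\<in>bits n. F a = F x}) / 2^n" if x: "x \<in> bits n" for x
  proof -
    let ?C = "{a\<in>bits n. F a = F x}"
    have cpos: "card ?C > 0" using x finite_bits[of n] by (auto simp: card_gt_0_iff)
    have "(\<Sum>a\<in>bits n. measure coins {r. A0 x r = a} * log 2 (measure coins {r. A0 x r = a}))
        = (\<Sum>a\<in>?C. (1 / card ?C) * log 2 (1 / card ?C))"
      by (rule sum.mono_neutral_cong_right[OF finite_bits]) (auto simp: q[OF x])
    also have "\<dots> = - log 2 (card ?C)"
      using cpos by (simp add: log_divide)
    finally show ?thesis by simp
  qed
  show "\<exists>A. collision_finder F n A \<and>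
      cond_H n (\<lambda>\<omega>. A (fst \<omega>) (snd \<omega>)) fst = cond_H n fst (\<lambda>\<omega>. F (fst \<omega>))"
  proof (rule exI[of _ A0], intro conjI cf)
    show "cond_H n (\<lambda>\<omega>. A0 (fst \<omega>) (snd \<omega>)) fst = cond_H n fst (\<lambda>\<omega>. F (fst \<omega>))"
      unfolding HA[OF cf] HF by (rule sum.cong[OF refl]) (rule ent)
  qed
qed

end
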